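(* Let $P(x)\in\mathbb{Z}[x]$ have degree $d\ge2$ and at least two distinct complex roots. Let $a,b$ be distinct positive integers. Then the polynomial $a\,P(y)-b\,P(x)\in\mathbb{C}[x,y]$ has no factor in $\mathbb{C}[x,y]$ of degree $1$. *)

theory Defs
  imports Complex_Main "HOL-Computational_Algebra.Polynomial"
begin

text \<open>Bivariate polynomials over a ring are represented as iterated univariate
  polynomials: the outer variable is y, the coefficients are polynomials in x,
  i.e. C[x,y] = C[x][y].\<close>

definition total_degree :: "'a::zero poly poly \<Rightarrow> nat" where
  "total_degree p = (if p = 0 then 0
     else Max {i + degree (coeff p i) | i. coeff p i \<noteq> 0})"

definition poly_in_x :: "'a::zero poly \<Rightarrow> 'a poly poly" where
  "poly_in_x p = [: p :]"

definition poly_in_y :: "'a::zero poly \<Rightarrow> 'a poly poly" where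
  "poly_in_y p = map_poly (\<lambda>c. [: c :]) p"

end

theory Submission
  imports Defs
begin

definition E2 :: "complex poly poly \<Rightarrow> complex \<Rightarrow> complex \<Rightarrow> complex" where
  "E2 F x y = poly (poly F [:y:]) x"

lemma E2_mult: "E2 (F * H) x y = E2 F x y * E2 H x y"
  by (simp add: E2_def)

lemma poly_map_const: "poly (map_poly (\<lambda>c. [:c:]) p) [:y:] = [:poly p y:]"
  by (induction p) (auto simp: map_poly_pCons mult.commute)

lemma deg1: "degree p \<le> 1 \<Longrightarrow> p = [:coeff p 0, coeff p 1:]"
  by (rule poly_eqI) (auto simp: coeff_pCons coeff_eq_0 split: nat.split)

lemma E2_G: "E2 (smult (of_nat a) (poly_in_y Q) - smult (of_nat b) (poly_in_x Q)) x y
   = of_nat a * poly Q y - of_nat b * poly Q x"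
  by (simp add: E2_def poly_in_y_def poly_in_x_def poly_map_const of_nat_poly)

lemma total_degree_1:
  fixes F :: "complex poly poly"
  assumes "total_degree F = 1"
  shows "\<exists>\<alpha> \<beta> \<gamma>. (\<alpha> \<noteq> 0 \<or> \<beta> \<noteq> 0) \<and> (\<forall>x y. E2 F x y = \<gamma> + \<alpha> * x + \<beta> * y)"
proof -
  have F0: "F \<noteq> 0" using assms by (auto simp: total_degree_def)
  define S where "S = {i + degree (coeff F i) | i. coeff F i \<noteq> 0}"
  have fin: "finite S" unfolding S_def
  proof -
    have "{i + degree (coeff F i) | i. coeff F i \<noteq> 0} = (\<lambda>i. i + degree (coeff F i)) ` {i. coeff F i \<noteq> 0}" by auto
    moreover have "finite {i. coeff F i \<noteq> 0}"
      by (rule finite_subset[of _ "{..degree F}"]) (auto intro: le_degree)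
    ultimately show "finite {i + degree (coeff F i) | i. coeff F i \<noteq> 0}" by simp
  qed
  have ne: "S \<noteq> {}" using F0 unfolding S_def
    by (metis (mono_tags, lifting) empty_iff leading_coeff_0_iff mem_Collect_eq)
  have M: "Max S = 1" using assms F0 by (simp add: total_degree_def S_def)
  have le: "i + degree (coeff F i) \<le> 1" if "coeff F i \<noteq> 0" for i
  proof -
    have "i + degree (coeff F i) \<in> S" using that S_def by auto
    then show ?thesis using Max_ge[OF fin] M by fastforce
  qed
  have ex1: "\<exists>i. coeff F i \<noteq> 0 \<and> i + degree (coeff F i) = 1"
    using Max_in[OF fin ne] M S_def by auto
  have dF: "degree F \<le> 1"
  proof (rule ccontr)
    assume "\<not> degree F \<le> 1"
    then have "coeff F (degree F) \<noteq> 0" using F0 by simp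
    then show False using le[of "degree F"] \<open>\<not> degree F \<le> 1\<close> by simp
  qed
  have d1: "degree (coeff F 1) = 0"
    using le[of 1] by (cases "coeff F 1 = 0") auto
  have d0: "degree (coeff F 0) \<le> 1"
    using le[of 0] by (cases "coeff F 0 = 0") auto
  define \<beta> where "\<beta> = coeff (coeff F 1) 0"
  define \<alpha> where "\<alpha> = coeff (coeff F 0) 1"
  define \<gamma> where "\<gamma> = coeff (coeff F 0) 0"
  have c1: "coeff F 1 = [:\<beta>:]" using d1 \<beta>_def by (metis degree_eq_zeroE coeff_pCons_0)
  have c0: "coeff F 0 = [:\<gamma>, \<alpha>:]" using deg1[OF d0] \<alpha>_def \<gamma>_def by simp
  have Feq: "F = [:coeff F 0, coeff F 1:]" using deg1[OF dF] .
  have "\<forall>x y. E2 F x y = \<gamma> + \<alpha> * x + \<beta> * y"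
    apply (subst Feq) by (simp add: E2_def c0 c1[simplified] algebra_simps)
  moreover have "\<alpha> \<noteq> 0 \<or> \<beta> \<noteq> 0"
  proof -
    obtain i where i: "coeff F i \<noteq> 0" "i + degree (coeff F i) = 1" using ex1 by blast
    then consider "i = 1" | "i = 0" "degree (coeff F 0) = 1" by (cases i) auto
    then show ?thesis
    proof cases
      case 1 then show ?thesis using i c1 by auto
    next
      case 2 then show ?thesis using c0 by (auto split: if_splits)
    qed
  qed
  ultimately show ?thesis by blast
qed


theorem mainTheorem4:
  fixes P :: "int poly" and a b :: nat
  assumes "degree P \<ge> 2"
    and "card {z::complex. poly (map_poly of_int P) z = 0} \<ge> 2"
    and "a > 0" and "b > 0" and "a \<noteq> b"
  shows "\<not> (\<exists>F :: complex poly poly. total_degree F = 1 \<and>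
            F dvd (smult (of_nat a) (poly_in_y (map_poly of_int P))
                   - smult (of_nat b) (poly_in_x (map_poly of_int P))))"
proof
  define Q :: "complex poly" where "Q = map_poly of_int P"
  have dQ: "degree Q = degree P" unfolding Q_def
    by (simp add: degree_map_poly)
  have dQ2: "degree Q \<ge> 2" using assms(1) dQ by simp
  then have Q0: "Q \<noteq> 0" by auto
  define R where "R = {z. poly Q z = 0}"
  have finR: "finite R" using Q0 R_def poly_roots_finite by auto
  obtain r1 r2 where r: "r1 \<in> R" "r2 \<in> R" "r1 \<noteq> r2"
  proof -
    have "card R \<ge> 2" using assms(2) R_def Q_def by simp
    moreover have "\<exists>r1\<in>R. \<exists>r2\<in>R. r1 \<noteq> r2"
    proof (rule ccontr)
      assume "\<not> ?thesis"
      then have "card R \<le> Suc 0" using card_le_Suc0_iff_eq[OF finR] by blast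
      then show False using \<open>card R \<ge> 2\<close> by simp
    qed
    ultimately show ?thesis using that by blast
  qed
  assume "\<exists>F :: complex poly poly. total_degree F = 1 \<and>
            F dvd (smult (of_nat a) (poly_in_y (map_poly of_int P))
                   - smult (of_nat b) (poly_in_x (map_poly of_int P)))"
  then obtain F H where tF: "total_degree F = 1"
    and GH: "smult (of_nat a) (poly_in_y Q) - smult (of_nat b) (poly_in_x Q) = F * H"
    unfolding Q_def by (metis dvdE)
  obtain \<alpha> \<beta> \<gamma> where ab: "\<alpha> \<noteq> 0 \<or> \<beta> \<noteq> 0" and EF: "\<And>x y. E2 F x y = \<gamma> + \<alpha> * x + \<beta> * y"
    using total_degree_1[OF tF] by blast
  have key: "of_nat a * poly Q y - of_nat b * poly Q x = (\<gamma> + \<alpha> * x + \<beta> * y) * E2 H x y" for x y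
    using arg_cong[OF GH, of "\<lambda>G. E2 G x y"] by (simp add: E2_G E2_mult EF)
  show False
  proof (cases "\<beta> = 0")
    case True
    then have a0: "\<alpha> \<noteq> 0" using ab by simp
    define x0 where "x0 = - \<gamma> / \<alpha>"
    have "\<gamma> + \<alpha> * x0 = 0" using a0 x0_def by simp
    note x0 = this
    have ay: "of_nat a * poly Q y = of_nat b * poly Q x0" for y
      using key[of y x0] True x0 by simp
    define c where "c = of_nat b * poly Q x0 / of_nat a"
    have Qy: "poly Q y = c" for y
      unfolding c_def using ay[of y] assms(3) by (simp add: eq_divide_eq ac_simps)
    have "Q = [:c:]"
    proof (subst poly_eq_poly_eq_iff[symmetric], rule ext)
      fix y show "poly Q y = poly [:c:] y"
        by (simp add: Qy)
    qed
    then have "degree Q = 0" by simp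
    then show False using dQ2 by simp
  next
    case False
    define l where "l = - \<alpha> / \<beta>"
    define m where "m = - \<gamma> / \<beta>"
    have lin: "\<gamma> + \<alpha> * x + \<beta> * (l * x + m) = 0" for x
      using False by (simp add: l_def m_def field_simps)
    have eqp: "of_nat a * poly Q (l * x + m) = of_nat b * poly Q x" for x
      using key[of "l * x + m" x] lin[of x] by simp
    have peq: "smult (of_nat a) (pcompose Q [:m, l:]) = smult (of_nat b) Q"
    proof (subst poly_eq_poly_eq_iff[symmetric], rule ext)
      fix x
      have h: "poly [:m, l:] x = l * x + m" by (simp add: algebra_simps)
      show "poly (smult (of_nat a) (pcompose Q [:m, l:])) x = poly (smult (of_nat b) Q) x"
        unfolding poly_smult poly_pcompose h by (rule eqp)
    qed
    have l0: "l \<noteq> 0"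
    proof
      assume "l = 0"
      then have "degree (pcompose Q [:m, l:]) = 0" by (simp add: degree_pcompose)
      then have "degree (smult (of_nat b) Q :: complex poly) = 0"
        using peq by (metis degree_smult_le le_zero_eq)
      then show False using assms(4) dQ2 by simp
    qed
    have "lead_coeff (smult (of_nat a) (pcompose Q [:m, l:])) = of_nat a * lead_coeff Q * l ^ degree Q"
      using l0 by (simp add: lead_coeff_comp)
    then have ld: "(of_nat b :: complex) = of_nat a * l ^ degree Q"
      using peq assms(4) Q0 by simp
    define phi where "phi z = l * z + m" for z
    have sub: "phi ` R \<subseteq> R"
    proof
      fix w assume "w \<in> phi ` R"
      then obtain z where z: "poly Q z = 0" "w = phi z" by (auto simp: R_def)
      have "of_nat a * poly Q (l * z + m) = 0" using eqp[of z] z(1) by simp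
      then show "w \<in> R" using assms(3) z(2) by (simp add: R_def phi_def)
    qed
    have inj: "inj_on phi R" using l0 by (auto simp: inj_on_def phi_def)
    have img: "phi ` R = R" using endo_inj_surj[OF finR sub inj] .
    have bij: "bij_betw phi R R" using inj img by (simp add: bij_betw_def)
    define S where "S = (\<Sum>r\<in>R. \<Sum>s\<in>R. cmod (r - s))"
    have "(\<Sum>r\<in>R. \<Sum>s\<in>R. cmod (phi r - phi s)) = S"
    proof -
      have "(\<Sum>r\<in>R. \<Sum>s\<in>R. cmod (phi r - phi s)) = (\<Sum>r\<in>R. \<Sum>s\<in>R. cmod (phi r - s))"
        by (rule sum.cong[OF refl]) (rule sum.reindex_bij_betw[OF bij])
      also have "\<dots> = S" unfolding S_def
        by (rule sum.reindex_bij_betw[OF bij, of "\<lambda>r. \<Sum>s\<in>R. cmod (r - s)"])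
      finally show ?thesis .
    qed
    moreover have "(\<Sum>r\<in>R. \<Sum>s\<in>R. cmod (phi r - phi s)) = cmod l * S"
    proof -
      have "cmod (phi r - phi s) = cmod l * cmod (r - s)" for r s
      proof -
        have "phi r - phi s = l * (r - s)" by (simp add: phi_def algebra_simps)
        then show ?thesis by (simp add: norm_mult)
      qed
      then show ?thesis unfolding S_def by (simp add: sum_distrib_left)
    qed
    ultimately have lS: "cmod l * S = S" by simp
    have "S > 0"
    proof -
      have "cmod (r1 - r2) \<le> (\<Sum>s\<in>R. cmod (r1 - s))"
        by (rule member_le_sum) (use r finR in auto)
      also have "\<dots> \<le> S" unfolding S_def
        by (rule member_le_sum[of r1 R "\<lambda>r. \<Sum>s\<in>R. cmod (r - s)"]) (use r finR in \<open>auto intro: sum_nonneg\<close>)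
      finally have "cmod (r1 - r2) \<le> S" .
      moreover have "cmod (r1 - r2) > 0" using r by simp
      ultimately show ?thesis by linarith
    qed
    then have "cmod l = 1" using lS by simp
    then have "cmod (of_nat a * l ^ degree Q) = real a" by (simp add: norm_mult norm_power)
    then have "real b = real a" using ld by (metis norm_of_nat)
    then show False using assms(5) by simp
  qed
qed

end
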